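(* Let $p$ be a prime and let $k,\ell,m,n$ be integers with $k>0$ and $\ell,m,n\ge 0$. Put $q=p^k$, $Q=p^{\ell}$, $R=p^m$, $S=p^n$. Let $c\in\mathbb{F}_q^*$ and define \[ f(X)=(X^q-X)^{Q+1}+c\,X^{q^2(R+S)}+c\,X^{q(R+S)}+c\,X^{R+S}\in\mathbb{F}_q[X], \] i.e. $f(X)=X^{Q+1}\circ(X^q-X)+(X^{q^2}+X^q+X)\circ cX^{R+S}$. Then $f(X)$ permutes $\mathbb{F}_{q^3}$ if and only if $\gcd\bigl(q-1,(Q+1)(R+S)\bigr)=1$. Equivalently, $f(X)$ permutes $\mathbb{F}_{q^3}$ if and only if $p=2$ and $\operatorname{ord}_2(k)\le\min\bigl(\operatorname{ord}_2(\ell),\operatorname{ord}_2(m-n)\bigr)$.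
   Context: A polynomial $g\in\mathbb{F}_{q^3}[X]$ permutes $\mathbb{F}_{q^3}$ if $\alpha\mapsto g(\alpha)$ is a bijection of $\mathbb{F}_{q^3}$. For a nonzero integer $N$, $\operatorname{ord}_2(N)$ is the largest integer $s\ge 0$ with $2^s\mid N$, and $\operatorname{ord}_2(0)=\infty$. The symbol $\circ$ denotes composition of polynomials. *)

theory Defs
  imports "HOL-Computational_Algebra.Computational_Algebra" "HOL-Library.Extended_Nat"
begin

definition ord2 :: "int \<Rightarrow> enat" where
  "ord2 N = (if N = 0 then \<infinity> else enat (multiplicity (2::int) N))"

definition f_poly :: "nat \<Rightarrow> nat \<Rightarrow> nat \<Rightarrow> nat \<Rightarrow> 'a::comm_ring_1 \<Rightarrow> 'a poly" where
  "f_poly q Q R S c =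
     (monom 1 q - monom 1 1) ^ (Q + 1)
     + monom c (q^2 * (R + S)) + monom c (q * (R + S)) + monom c (R + S)"

end

theory Submission
  imports Defs "HOL-Algebra.Multiplicative_Group"
begin

definition tring :: "'a::field ring" where
  "tring = \<lparr>carrier = UNIV, monoid.mult = (\<lambda>x y. x * y), one = 1, ring.zero = 0, add = (\<lambda>x y. x + y)\<rparr>"

lemma tring_field: "Ring.field (tring :: 'a::field ring)"
proof -
  have "\<exists>y. x + y = 0" for x :: 'a
    using add.right_inverse by blast
  moreover have "x \<noteq> 0 \<Longrightarrow> \<exists>y. x * y = 1" for x :: 'a
    by (rule exI[of _ "inverse x"]) auto
  ultimately show ?thesis
    unfolding tring_def by unfold_locales (auto simp:algebra_simps Units_def)
qed

lemma tring_pow: "(x::'a::field) [^]\<^bsub>mult_of tring\<^esub> (i::nat) = x ^ i"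
  by (induction i) (simp_all add: tring_def mult_of_def)


lemma tring_pow2: "(x::'a::field) [^]\<^bsub>tring\<^esub> (i::nat) = x ^ i"
  by (induction i) (simp_all add: tring_def)
lemma car: "carrier (mult_of (tring :: 'a::field ring)) = UNIV - {0}"
    by (simp add: tring_def mult_of_def)
lemma gen_exists: "\<exists>g::'a::{field,finite}. g \<noteq> 0 \<and> (\<forall>x. x \<noteq> 0 \<longrightarrow> (\<exists>i. x = g ^ i))"
proof -
  interpret F: Ring.field "tring :: 'a ring" by (rule tring_field)
  have fin: "finite (carrier (tring :: 'a ring))" by (simp add: tring_def)
  have "\<exists>a\<in>carrier (mult_of (tring::'a ring)). carrier (mult_of (tring::'a ring)) = {a[^]\<^bsub>tring\<^esub>i | i::nat . i \<in> UNIV}"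
    by (rule F.finite_field_mult_group_has_gen[OF fin])
  then obtain g where g1: "g \<in> carrier (mult_of (tring::'a ring))" and
    g2: "carrier (mult_of (tring::'a ring)) = {g[^]\<^bsub>tring\<^esub>i | i::nat . i \<in> UNIV}" by (elim bexE)
  have "g \<noteq> 0" using g1 car by blast
  moreover have "\<exists>i. x = g ^ i" if "x \<noteq> 0" for x
  proof -
    have "x \<in> carrier (mult_of (tring::'a ring))" using car that by blast
    then have "x \<in> {g[^]\<^bsub>tring\<^esub>i | i::nat . i \<in> UNIV}" using g2 by (simp only:)
    then obtain i :: nat where "x = g[^]\<^bsub>tring\<^esub>i" by blast
    then show ?thesis by (auto simp: tring_pow2)
  qed
  ultimately show ?thesis by blast
qed
lemma fermat:
  fixes x :: "'a::{field,finite}"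
  shows   "x ^ card (UNIV :: 'a set) = x"
proof (cases "x = 0")
  case False
  have "x * (\<Prod>y\<in>UNIV-{0}. x * y) = x * x ^ (card (UNIV :: 'a set) - 1) * \<Prod>(UNIV-{0})"
    by (simp add: prod.distrib mult_ac)
  also have "x * x ^ (card (UNIV :: 'a set) - 1) = x ^ Suc (card (UNIV :: 'a set) - 1)"
    by (subst power_Suc) auto
  also have "Suc (card (UNIV :: 'a set) - 1) = card (UNIV :: 'a set)"
    using finite_UNIV_card_ge_0[where ?'a = 'a] by simp
  also have "(\<Prod>y\<in>UNIV-{0}. x * y) = (\<Prod>y\<in>UNIV-{0}. y)"
    by (rule prod.reindex_bij_witness[of _ "\<lambda>y. y / x" "\<lambda>y. x * y"]) (use False in auto)
  finally show ?thesis
    by simp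
qed (use finite_UNIV_card_ge_0[where ?'a = 'a] in auto)

lemma card_of_nat_zero: "of_nat (card (UNIV::'a::{field,finite} set)) = (0::'a)"
proof -
  have "(\<Sum>x\<in>UNIV. x) = (\<Sum>x\<in>UNIV. x + (1::'a))"
    by (rule sum.reindex_bij_witness[of _ "\<lambda>y. y + 1" "\<lambda>y. y - 1"]) auto
  then show ?thesis by (simp add: sum.distrib)
qed

section \<open>Characteristic 2\<close>

lemma c2_neg: assumes "(2::'a::field) = 0" shows "- (x::'a) = x"
proof -
  have "x + x = 2 * x" by (simp only: mult_2)
  then have "x + x = 0" using assms by simp
  then show ?thesis by (simp only: neg_eq_iff_add_eq_0)
qed

lemma c2_minus: assumes "(2::'a::field) = 0" shows "(x::'a) - y = x + y"
proof -
  have "x - y = x + - y" by simp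
  then show ?thesis using c2_neg[OF assms, of y] by simp
qed

lemma c2_dbl: assumes "(2::'a::field) = 0" shows "(x::'a) + x = 0"
proof -
  have "x + x = 2 * x" by (simp only: mult_2)
  then show "x + x = 0" using assms by simp
qed

lemma c2_sq: assumes "(2::'a::field) = 0" shows "((x::'a) + y)^2 = x^2 + y^2"
proof -
  have "(x+y)^2 = x^2 + y^2 + 2*x*y" by (simp add: power2_eq_square algebra_simps)
  then show ?thesis using assms by simp
qed

lemma frob_add: assumes "(2::'a::field) = 0" shows "((x::'a) + y)^(2^j) = x^(2^j) + y^(2^j)"
proof (induction j)
  case 0 then show ?case by simp
next
  case (Suc j)
  have "(x+y)^(2^Suc j) = ((x+y)^(2^j))^2" by (simp add: power_mult[symmetric] mult.commute)
  also have "\<dots> = (x^(2^j))^2 + (y^(2^j))^2" using Suc c2_sq[OF assms] by simp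
  also have "\<dots> = x^(2^Suc j) + y^(2^Suc j)" by (simp add: power_mult[symmetric] mult.commute)
  finally show ?case .
qed

lemma frob_inj: assumes "(2::'a::field) = 0" and "(x::'a)^(2^j) = y^(2^j)" shows "x = y"
proof -
  have "(x+y)^(2^j) = 0" using frob_add[OF assms(1)] assms(2) c2_dbl[OF assms(1)] by simp
  then have "x + y = 0" by simp
  then have "- x = y" by (simp only: neg_eq_iff_add_eq_0)
  then show ?thesis using c2_neg[OF assms(1), of x] by simp
qed

lemma frob_mult_closed: assumes "(x::'a::field)^(2^a) = x" shows "x^(2^(a*t)) = x"
proof (induction t)
  case 0 then show ?case by simp
next
  case (Suc t)
  have "x^(2^(a*Suc t)) = (x^(2^a))^(2^(a*t))"
    by (simp add: power_mult[symmetric] power_add[symmetric])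
  then show ?case using assms Suc by simp
qed

lemma frob_dvd_closed: assumes "(x::'a::field)^(2^a) = x" "a dvd b" shows "x^(2^b) = x"
  using assms frob_mult_closed by (metis dvdE)

lemma frob_sub: assumes "(2::'a::field) = 0" "(x::'a)^(2^a) = x" "x^(2^b) = x" "b \<le> a"
  shows "x^(2^(a-b)) = x"
proof -
  have "(x^(2^(a-b)))^(2^b) = x^(2^a)"
    using assms(4) by (simp add: power_mult[symmetric] power_add[symmetric])
  then have "(x^(2^(a-b)))^(2^b) = x^(2^b)" using assms by simp
  then show ?thesis using frob_inj[OF assms(1)] by blast
qed

lemma frob_gcd: assumes "(2::'a::field) = 0" "(x::'a)^(2^a) = x" "x^(2^b) = x"
  shows "x^(2^(gcd a b)) = x"
proof (cases "a = 0")
  case True then show ?thesis using assms by simp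
next
  case False
  then obtain s t where st: "a * s = b * t + gcd a b" using bezout_nat by blast
  have h1: "x^(2^(a*s)) = x" using frob_mult_closed assms by blast
  have h2: "x^(2^(b*t)) = x" using frob_mult_closed assms by blast
  have le: "b*t \<le> a*s" using st by simp
  have "x^(2^(a*s - b*t)) = x" using frob_sub[OF assms(1) h1 h2 le] .
  moreover have "a*s - b*t = gcd a b" using st by simp
  ultimately show ?thesis by simp
qed

lemma root1: assumes "(2::'a::field) = 0" "(w::'a)^(2^j+1) = 1" "w^(2^b) = w" "gcd (2*j) b dvd j"
  shows "w = 1"
proof -
  have wj: "w^(2^j) * w = 1" using assms(2) by (simp add: power_add mult.commute)
  then have w0: "w \<noteq> 0" by auto
  have wi: "w^(2^j) = inverse w" using wj w0 by (simp add: field_simps)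
  have "w^(2^(2*j)) = (w^(2^j))^(2^j)"
  proof -
    have "(2::nat)^(2*j) = 2^j * 2^j" by (metis mult_2 power_add)
    then show ?thesis by (simp only: power_mult)
  qed
  also have "\<dots> = w" using wi by (simp add: power_inverse)
  finally have "w^(2^(2*j)) = w" .
  then have "w^(2^(gcd (2*j) b)) = w" using frob_gcd[OF assms(1)] assms(3) by blast
  then have "w^(2^j) = w" using frob_dvd_closed assms(4) by blast
  then have "w^2 = 1" using wj by (simp add: power2_eq_square)
  then have "(w+1)^2 = 1 + 1" using c2_sq[OF assms(1), of w 1] by simp
  then have "(w+1)^2 = 0" using assms(1) by (simp add: one_add_one)
  then have "w + 1 = 0" by simp
  then have "w = - 1" by (simp only: eq_neg_iff_add_eq_0)
  then show ?thesis using c2_neg[OF assms(1), of 1] by simp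
qed

lemma noroot: assumes "(2::'a::field) = 0" "(z::'a)^(2^j) + z + 1 = 0" "z^(2^b) = z" "gcd (2*j) b dvd j"
  shows False
proof -
  have zj: "z^(2^j) = z + 1"
  proof -
    have "z^(2^j) + (z + 1) = 0" using assms(2) by (simp add: add.assoc)
    then have "z^(2^j) = - (z + 1)" by (simp only: eq_neg_iff_add_eq_0)
    then show ?thesis using c2_neg[OF assms(1), of "z+1"] by simp
  qed
  have "z^(2^(2*j)) = (z^(2^j))^(2^j)"
  proof -
    have "(2::nat)^(2*j) = 2^j * 2^j" by (metis mult_2 power_add)
    then show ?thesis by (simp only: power_mult)
  qed
  also have "\<dots> = z^(2^j) + 1" using zj frob_add[OF assms(1)] by simp
  also have "\<dots> = z" using zj c2_dbl[OF assms(1), of 1] by (simp add: add.assoc)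
  finally have "z^(2^(2*j)) = z" .
  then have "z^(2^(gcd (2*j) b)) = z" using frob_gcd[OF assms(1)] assms(3) by blast
  then have "z^(2^j) = z" using frob_dvd_closed assms(4) by blast
  then show False using zj by simp
qed

definition cond2 :: "nat \<Rightarrow> nat \<Rightarrow> bool" where
  "cond2 b j \<longleftrightarrow> j = 0 \<or> multiplicity (2::int) (int b) \<le> multiplicity (2::int) (int j)"

lemma prime_dvd_2_int: assumes "prime (p::int)" "p dvd 2" shows "p = 2"
proof -
  have "prime (2::int)" by simp
  then show ?thesis using primes_dvd_imp_eq assms by blast
qed

lemma M1: assumes "b > 0" "cond2 b j" shows "gcd (2*j) b dvd j"
proof (cases "j = 0")
  case True then show ?thesis by simp
next
  case False
  define G where "G = gcd (2 * int j) (int b)"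
  have G0: "G \<noteq> 0" using assms(1) by (simp add: G_def)
  have Gd1: "G dvd 2 * int j" and Gd2: "G dvd int b" by (simp_all add: G_def)
  have "G dvd int j"
  proof (rule multiplicity_le_imp_dvd[OF G0])
    fix p :: int assume p: "prime p"
    show "multiplicity p G \<le> multiplicity p (int j)"
    proof (cases "p = 2")
      case True
      have "multiplicity p G \<le> multiplicity p (int b)"
        by (rule dvd_imp_multiplicity_le[OF Gd2]) (use assms(1) in simp)
      also have "\<dots> \<le> multiplicity p (int j)" using assms(2) False True by (simp add: cond2_def)
      finally show ?thesis .
    next
      case ne: False
      have "multiplicity p G \<le> multiplicity p (2 * int j)"
        by (rule dvd_imp_multiplicity_le[OF Gd1]) (use \<open>j \<noteq> 0\<close> in simp)
      also have "\<dots> = multiplicity p 2 + multiplicity p (int j)"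
        by (rule prime_elem_multiplicity_mult_distrib) (use p \<open>j \<noteq> 0\<close> in auto)
      also have "multiplicity p 2 = 0"
        by (rule not_dvd_imp_multiplicity_0) (use p ne prime_dvd_2_int in blast)
      finally show ?thesis by simp
    qed
  qed
  moreover have "G = int (gcd (2*j) b)"
  proof -
    have "G = gcd (int (2*j)) (int b)" by (simp add: G_def)
    then show ?thesis by (simp only: gcd_int_int_eq)
  qed
  ultimately show ?thesis by (simp only: int_dvd_int_iff)
qed

lemma M2: assumes "\<not> cond2 b j" shows "\<exists>h. 2*h dvd b \<and> h dvd j \<and> odd (j div h) \<and> h > 0"
proof -
  have j0: "j \<noteq> 0" and lt: "multiplicity (2::int) (int j) < multiplicity 2 (int b)"
    using assms by (auto simp: cond2_def)
  define v where "v = multiplicity (2::int) (int j)"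
  have "(2::int)^(Suc v) dvd int b" by (rule multiplicity_dvd') (use lt in \<open>simp add: v_def\<close>)
  then have "int (2 * 2^v) dvd int b" by simp
  then have d1: "2 * 2^v dvd b" by (simp only: int_dvd_int_iff)
  have "(2::int)^v dvd int j" unfolding v_def by (rule multiplicity_dvd)
  then have "int (2^v) dvd int j" by simp
  then have d2: "2^v dvd j" by (simp only: int_dvd_int_iff)
  have "odd (j div 2^v)"
  proof
    assume "even (j div 2^v)"
    then obtain t where t: "j div 2^v = 2 * t" by (elim evenE)
    have "j = 2^v * (j div 2^v)" using d2 by simp
    then have "j = 2^(Suc v) * t" using t by simp
    then have "int (2^(Suc v)) dvd int j" by simp
    then have "(2::int)^(Suc v) dvd int j" by simp
    then have "Suc v \<le> multiplicity (2::int) (int j)" by (intro multiplicity_geI) (use j0 in auto)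
    then show False by (simp add: v_def)
  qed
  then show ?thesis using d1 d2 by (intro exI[of _ "2^v"]) auto
qed

lemma M3: assumes "k > 0" shows "cond2 (3*k) j = cond2 k j"
proof -
  have "multiplicity (2::int) (int (3*k)) = multiplicity (2::int) (3 * int k)" by simp
  also have "\<dots> = multiplicity (2::int) 3 + multiplicity 2 (int k)"
    by (rule prime_elem_multiplicity_mult_distrib) (use assms in auto)
  also have "multiplicity (2::int) 3 = 0" by (rule not_dvd_imp_multiplicity_0) simp
  finally show ?thesis by (simp add: cond2_def)
qed

lemma gen_order:
  fixes g :: "'a::{field,finite}"
  assumes gen: "\<forall>x. x \<noteq> 0 \<longrightarrow> (\<exists>i. x = g^i)" and j: "0 < j" "g^j = 1"
  shows "card (UNIV::'a set) - 1 \<le> j"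
proof -
  have "UNIV - {0} \<subseteq> (\<lambda>i. g^i) ` {..<j}"
  proof
    fix x assume "x \<in> (UNIV::'a set) - {0}"
    then obtain i where xi: "x = g^i" using gen by auto
    have "g^i = g^(j*(i div j) + i mod j)" by (metis mult_div_mod_eq)
    also have "\<dots> = (g^j)^(i div j) * g^(i mod j)" by (simp only: power_add power_mult)
    finally have "x = g^(i mod j)" using j xi by simp
    then show "x \<in> (\<lambda>i. g^i) ` {..<j}" using j by auto
  qed
  then have "card (UNIV - {0::'a}) \<le> card ((\<lambda>i. g^i) ` {..<j})" by (intro card_mono) auto
  also have "\<dots> \<le> j" using card_image_le[of "{..<j}" "\<lambda>i. g^i"] by simp
  finally show ?thesis by (simp add: card_Diff_singleton)
qed

lemma card_ge2: "card (UNIV::'a::{field,finite} set) \<ge> 2"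
proof -
  have "card {0::'a, 1} \<le> card (UNIV::'a set)" by (rule card_mono) auto
  then show ?thesis by simp
qed

lemma gen_pow_N1:
  fixes g :: "'a::{field,finite}"
  assumes "g \<noteq> 0" shows "g^(card (UNIV::'a set) - 1) = 1"
proof -
  have "g * g^(card (UNIV::'a set) - 1) = g^(Suc (card (UNIV::'a set) - 1))" by simp
  also have "Suc (card (UNIV::'a set) - 1) = card (UNIV::'a set)" using card_ge2[where 'a='a] by simp
  also have "g^card (UNIV::'a set) = g" by (rule fermat)
  finally show ?thesis using assms by simp
qed

lemma root_exists:
  assumes "1 < d" "d dvd card (UNIV::'a::{field,finite} set) - 1"
  shows "\<exists>w::'a. w^d = 1 \<and> w \<noteq> 1"
proof -
  obtain g :: 'a where g0: "g \<noteq> 0" and gen: "\<forall>x. x \<noteq> 0 \<longrightarrow> (\<exists>i. x = g^i)"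
    using gen_exists by blast
  define N where "N = card (UNIV::'a set)"
  obtain M where M: "N - 1 = d * M" using assms(2) unfolding N_def by (elim dvdE)
  have N1: "N - 1 > 0" using card_ge2[where 'a='a] by (simp add: N_def)
  then have M0: "M > 0" using M by (cases M) auto
  have gN: "g^(N-1) = 1" unfolding N_def by (rule gen_pow_N1[OF g0])
  have "(g^M)^d = 1" using gN M by (simp add: power_mult[symmetric] mult.commute)
  moreover have "g^M \<noteq> 1"
  proof
    assume "g^M = 1"
    then have "N - 1 \<le> M" using gen_order[OF gen M0] by (simp add: N_def)
    moreover have "N - 1 \<ge> 2 * M" using M assms(1) by simp
    ultimately show False using M0 by simp
  qed
  ultimately show ?thesis by blast
qed

definition Tr :: "nat \<Rightarrow> 'a::field \<Rightarrow> 'a" where "Tr q x = (x^q)^q + x^q + x"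

lemma poly_f: "poly (f_poly q Q R S c) (x::'a::field) =
   (x^q - x)^(Q+1) + c*x^(q^2*(R+S)) + c*x^(q*(R+S)) + c*x^(R+S)"
  by (simp add: f_poly_def poly_monom)

lemma c2_eq: assumes "(2::'a::field) = 0" shows "(x::'a) + y = 0 \<longleftrightarrow> x = y"
proof
  assume "x + y = 0"
  then have "- x = y" by (simp only: neg_eq_iff_add_eq_0)
  then show "x = y" using c2_neg[OF assms, of x] by simp
next
  assume "x = y" then show "x + y = 0" using c2_dbl[OF assms] by simp
qed

lemma ident8:
  fixes ua ub va vb Ua Ub Va Vb :: "'a::comm_ring_1"
  shows "(Ua*ua + Ub*ub)*(Va*va + Va*vb + va*Vb) + (Va*va + Vb*vb)*(Ua*ua + Ua*ub + ua*Ub) =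
   (ub*va + ua*vb)*(Ub*Vb + Ua*Va + Ua*Vb) + (Ub*Va + Ua*Vb)*(ub*vb + ua*va + ua*vb)
   + (Ub*Va + Ua*Vb)*(ub*va + ua*vb) + 2*(ua*va*Ua*Va - ua*vb*Ua*Vb - ub*va*Ua*Vb - ua*vb*Ub*Va)"
  by (simp add: algebra_simps)

locale c2f =
  fixes k :: nat and c :: "'a::{field,finite}"
  assumes two: "(2::'a) = 0" and kpos: "0 < k" and card: "card (UNIV::'a set) = (2^k)^3"
    and c0: "c \<noteq> 0" and cq: "c^(2^k) = c"
begin

abbreviation q :: nat where "q \<equiv> 2^k"

lemma card3: "card (UNIV::'a set) = 2^(3*k)"
  using card by (simp add: power_mult[symmetric] mult.commute)

lemma fq3: "(x::'a)^(2^(3*k)) = x" using fermat[of x] card3 by simp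

lemma q3: "(((x::'a)^q)^q)^q = x"
proof -
  have "(((x::'a)^q)^q)^q = x^(q*q*q)" by (simp only: power_mult)
  also have "q*q*q = 2^(3*k)"
  proof -
    have "(3::nat)*k = k + k + k" by simp
    then show ?thesis by (simp only: power_add)
  qed
  finally show ?thesis using fq3 by simp
qed

lemma qadd: "((x::'a)+y)^q = x^q + y^q" by (rule frob_add[OF two])

lemma pow_comm: "((x::'a)^a)^b = (x^b)^a" by (simp only: power_mult[symmetric] mult.commute)

lemma Fq_pow: "(a::'a)^q = a \<Longrightarrow> (a^j)^q = a^j" using pow_comm by metis

lemma Fq_mult: "(a::'a)^q = a \<Longrightarrow> b^q = b \<Longrightarrow> (a*b)^q = a*b" by (simp add: power_mult_distrib)

lemma Tq: "(Tr q x)^q = Tr q (x::'a)"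
  unfolding Tr_def by (simp add: qadd q3 add_ac)

lemma Tadd: "Tr q ((x::'a)+y) = Tr q x + Tr q y"
  unfolding Tr_def by (simp add: qadd add_ac)

lemma Tscal: "(a::'a)^q = a \<Longrightarrow> Tr q (a*y) = a * Tr q y"
  unfolding Tr_def by (simp add: power_mult_distrib distrib_left)

lemma Tconst: assumes "(a::'a)^q = a" shows "Tr q a = a"
proof -
  have h: "a + a = 0" by (rule c2_dbl[OF two])
  have "Tr q a = (a + a) + a" using assms by (simp only: Tr_def)
  then show ?thesis using h by (simp only: add_0)
qed

lemma Tpow: "Tr q ((x::'a)^(2^j)) = (Tr q x)^(2^j)"
  unfolding Tr_def by (simp add: frob_add[OF two] pow_comm[of x "2^j"] pow_comm[of "x^q" "2^j"])

lemma Fq_zero: "(x::'a)^q = x \<Longrightarrow> Tr q x = 0 \<Longrightarrow> x = 0"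
  using Tconst by simp

lemma Tr_diff_zero: "Tr q ((x::'a)^q + x) = 0"
proof -
  have "Tr q (x^q) = Tr q x" unfolding Tr_def by (simp add: q3 add_ac)
  then show ?thesis using Tadd c2_dbl[OF two] by simp
qed

lemma fpoly: "poly (f_poly q (2^l) (2^m) (2^n) c) (x::'a) = (x^q + x)^(2^l+1) + Tr q (c * x^(2^m+2^n))"
proof -
  define e :: nat where "e = 2^m + 2^n"
  have "poly (f_poly q (2^l) (2^m) (2^n) c) x = (x^q - x)^(2^l+1) + c*x^(q^2*e) + c*x^(q*e) + c*x^e"
    unfolding e_def by (rule poly_f)
  also have "x^q - x = x^q + x" by (rule c2_minus[OF two])
  also have "c*x^(q^2*e) = ((c*x^e)^q)^q"
  proof -
    have "((c*x^e)^q)^q = ((c^q)^q) * ((x^e)^q)^q" by (simp add: power_mult_distrib)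
    also have "\<dots> = c * x^(e*q*q)" using cq by (simp add: power_mult)
    also have "e*q*q = q^2*e" by (simp add: power2_eq_square)
    finally show ?thesis by simp
  qed
  also have "c*x^(q*e) = (c*x^e)^q"
  proof -
    have "(c*x^e)^q = c^q * (x^e)^q" by (simp add: power_mult_distrib)
    also have "\<dots> = c * x^(e*q)" using cq by (simp add: power_mult)
    finally show ?thesis by (simp add: mult.commute)
  qed
  finally show ?thesis unfolding Tr_def e_def by (simp add: add_ac)
qed

end

context c2f begin

lemma shift:
  assumes aq: "(a::'a)^q = a"
  shows "Tr q (c*(x+a)^(2^m+2^n)) = Tr q (c*x^(2^m+2^n)) + c*((a + Tr q x)^(2^m+2^n) + (Tr q x)^(2^m+2^n))"
proof -
  define t where "t = Tr q x"
  define R :: nat where "R = 2^m"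
  define S :: nat where "S = 2^n"
  have aR: "(a^R)^q = a^R" and aS: "(a^S)^q = a^S" using Fq_pow[OF aq] by blast+
  have aRS: "(a^R*a^S)^q = a^R*a^S" using Fq_mult[OF aR aS] .
  have e1: "(x+a)^(R+S) = x^(R+S) + a^R*x^S + a^S*x^R + a^R*a^S"
  proof -
    have "(x+a)^(R+S) = (x+a)^R * (x+a)^S" by (simp add: power_add)
    also have "\<dots> = (x^R + a^R) * (x^S + a^S)" unfolding R_def S_def by (simp add: frob_add[OF two])
    finally show ?thesis by (simp add: algebra_simps power_add)
  qed
  have T1: "Tr q ((x+a)^(R+S)) = Tr q (x^(R+S)) + Tr q (a^R*x^S) + Tr q (a^S*x^R) + Tr q (a^R*a^S)"
    by (simp only: e1 Tadd)
  have T2: "Tr q (a^R*x^S) = a^R*t^S" unfolding t_def S_def using Tscal[OF aR] Tpow by simp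
  have T3: "Tr q (a^S*x^R) = a^S*t^R" unfolding t_def R_def using Tscal[OF aS] Tpow by simp
  have T4: "Tr q (a^R*a^S) = a^R*a^S" using Tconst[OF aRS] .
  have "Tr q ((x+a)^(R+S)) = Tr q (x^(R+S)) + a^R*t^S + a^S*t^R + a^R*a^S"
    using T1 T2 T3 T4 by simp
  then have lhs: "Tr q (c*(x+a)^(R+S)) = c*(Tr q (x^(R+S)) + a^R*t^S + a^S*t^R + a^R*a^S)"
    using Tscal[OF cq] by simp
  have rhs0: "(a+t)^(R+S) + t^(R+S) = a^R*a^S + a^R*t^S + a^S*t^R + (t^R*t^S + t^R*t^S)"
  proof -
    have "(a+t)^(R+S) = (a^R + t^R)*(a^S+t^S)" unfolding R_def S_def by (simp add: power_add frob_add[OF two])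
    then show ?thesis by (simp add: algebra_simps power_add)
  qed
  have "t^R*t^S + t^R*t^S = 0" by (rule c2_dbl[OF two])
  then have rhs: "(a+t)^(R+S) + t^(R+S) = a^R*a^S + a^R*t^S + a^S*t^R" using rhs0 by simp
  have "Tr q (c*x^(R+S)) = c * Tr q (x^(R+S))" using Tscal[OF cq] by simp
  then show ?thesis using lhs rhs unfolding R_def[symmetric] S_def[symmetric] t_def[symmetric]
    by (simp add: algebra_simps)
qed

lemma inj_e:
  assumes nl: "\<forall>w::'a. w^q = w \<and> w^(2^d+1) = 1 \<longrightarrow> w = 1"
    and aq: "(a::'a)^q = a" and bq: "b^q = b" and ab: "a^(2^mn*(2^d+1)) = b^(2^mn*(2^d+1))"
  shows "a = b"
proof -
  have "(a^(2^d+1))^(2^mn) = (b^(2^d+1))^(2^mn)"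
    using ab by (simp only: mult.commute[of "2^mn" "2^d+1"] power_mult)
  then have A: "a^(2^d+1) = b^(2^d+1)" by (rule frob_inj[OF two])
  show ?thesis
  proof (cases "b = 0")
    case True
    then show ?thesis using A by simp
  next
    case False
    define w where "w = a / b"
    have "w^q = w" unfolding w_def using aq bq by (simp add: power_divide)
    moreover have "w^(2^d+1) = 1" unfolding w_def using A False by (simp add: power_divide)
    ultimately have "w = 1" using nl by blast
    then show ?thesis using False unfolding w_def by simp
  qed
qed

lemma injQ:
  assumes g: "gcd (2*l) (3*k) dvd l" and xy: "(x::'a)^(2^l+1) = y^(2^l+1)"
  shows "x = y"
proof (cases "y = 0")
  case True
  then show ?thesis using xy by simp
next
  case False
  define w where "w = x / y"
  have "w^(2^l+1) = 1" unfolding w_def using xy False by (simp add: power_divide)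
  moreover have "w^(2^(3*k)) = w" by (rule fq3)
  ultimately have "w = 1" using root1[OF two _ _ g] by blast
  then show ?thesis using False unfolding w_def by simp
qed

lemma noQroot:
  assumes g: "gcd (2*l) (3*k) dvd l"
  shows "(z::'a)^(2^l) + z + 1 \<noteq> 0"
  using noroot[OF two _ fq3 g] by blast

end

context c2f begin

lemma keyH:
  assumes g: "gcd (2*l) (3*k) dvd l" and tu: "Tr q u = 0" and tv: "Tr q v = 0"
    and h: "(u^(2^l+1) + v^(2^l+1))^q = u^(2^l+1) + v^(2^l+1)"
  shows "u = (v::'a)"
proof -
  define Q :: nat where "Q = 2^l"
  define u1 where "u1 = u^q"
  define v1 where "v1 = v^q"
  have hu: "u1^q = u1 + u"
  proof -
    have "(u^q)^q + (u^q + u) = 0" using tu unfolding Tr_def by (simp add: add.assoc)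
    then have "(u^q)^q = u^q + u" by (simp only: c2_eq[OF two])
    then show ?thesis unfolding u1_def .
  qed
  have hv: "v1^q = v1 + v"
  proof -
    have "(v^q)^q + (v^q + v) = 0" using tv unfolding Tr_def by (simp add: add.assoc)
    then have "(v^q)^q = v^q + v" by (simp only: c2_eq[OF two])
    then show ?thesis unfolding v1_def .
  qed
  have Qadd: "(x+y)^Q = x^Q + y^Q" for x y :: 'a unfolding Q_def by (rule frob_add[OF two])
  have Qmul: "(x*y)^Q = x^Q*y^Q" for x y :: 'a by (rule power_mult_distrib)
  have P1: "x^(Q+1) = x^Q * x" for x :: 'a by (simp add: mult.commute)
  have comm: "(x^(Q+1))^q = (x^q)^(Q+1)" for x :: 'a by (rule pow_comm)
  have h': "(u^(Q+1) + v^(Q+1))^q = u^(Q+1) + v^(Q+1)" using h unfolding Q_def .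
  have E0: "u1^(Q+1) + v1^(Q+1) = u^(Q+1) + v^(Q+1)"
    using h' unfolding u1_def v1_def by (simp only: qadd comm)
  have E1: "(u1+u)^(Q+1) + (v1+v)^(Q+1) = u1^(Q+1) + v1^(Q+1)"
  proof -
    have "(u1^(Q+1) + v1^(Q+1))^q = u1^(Q+1) + v1^(Q+1)" using E0 h' by simp
    then show ?thesis by (simp only: qadd comm hu hv)
  qed
  define U where "U = u^Q"
  define U1 where "U1 = u1^Q"
  define V where "V = v^Q"
  define V1 where "V1 = v1^Q"
  have H0: "u1^(Q+1) + v1^(Q+1) + (u^(Q+1) + v^(Q+1)) = 0" using E0 c2_eq[OF two] by blast
  have H1: "(U*u + U1*u1) + (V*v + V1*v1) = 0"
  proof -
    have "(U*u + U1*u1) + (V*v + V1*v1) = u1^(Q+1) + v1^(Q+1) + (u^(Q+1) + v^(Q+1))"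
      unfolding U_def U1_def V_def V1_def P1 by (simp add: add_ac)
    then show ?thesis using H0 by simp
  qed
  have H2: "(U*u + U*u1 + u*U1) + (V*v + V*v1 + v*V1) = 0"
  proof -
    have "(u1+u)^(Q+1) + (v1+v)^(Q+1) + (u1^(Q+1) + v1^(Q+1)) = 0" using E1 c2_eq[OF two] by blast
    moreover have "(u1+u)^(Q+1) + (v1+v)^(Q+1) + (u1^(Q+1) + v1^(Q+1))
        = (U*u + U*u1 + u*U1) + (V*v + V*v1 + v*V1) + 2*(U1*u1 + V1*v1)"
      unfolding U_def U1_def V_def V1_def P1 Qadd by (simp add: algebra_simps)
    ultimately show ?thesis using two by simp
  qed
  have R0: "(u1*v + u*v1)*(U1*V1 + U*V + U*V1) + (U1*V + U*V1)*(u1*v1 + u*v + u*v1)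
      + (U1*V + U*V1)*(u1*v + u*v1) = 0"
  proof -
    have "(U*u + U1*u1)*(V*v + V*v1 + v*V1) + (V*v + V1*v1)*(U*u + U*u1 + u*U1)
       = (U*u + U1*u1)*((U*u + U*u1 + u*U1) + (V*v + V*v1 + v*V1))
         + (U*u + U*u1 + u*U1)*((U*u + U1*u1) + (V*v + V1*v1))
         - 2*((U*u + U1*u1)*(U*u + U*u1 + u*U1))" by (simp add: algebra_simps)
    then have "(U*u + U1*u1)*(V*v + V*v1 + v*V1) + (V*v + V1*v1)*(U*u + U*u1 + u*U1) = 0"
      using H1 H2 two by simp
    then show ?thesis using ident8[where ua=u and ub=u1 and va=v and vb=v1 and Ua=U and Ub=U1 and Va=V and Vb=V1] two by simp
  qed
  have dQ: "(u1*v + u*v1)^Q = U1*V + U*V1" unfolding U_def U1_def V_def V1_def by (simp add: Qadd Qmul)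
  have eQ: "(u1*v1 + u*v + u*v1)^Q = U1*V1 + U*V + U*V1" unfolding U_def U1_def V_def V1_def by (simp add: Qadd Qmul)
  have delta0: "u1*v + u*v1 = 0"
  proof (rule ccontr)
    assume dn: "u1*v + u*v1 \<noteq> 0"
    define dd where "dd = u1*v + u*v1"
    define ee where "ee = u1*v1 + u*v + u*v1"
    have dd0: "dd \<noteq> 0" using dn by (simp add: dd_def)
    have ddQ: "dd^Q \<noteq> 0" using dd0 by simp
    define z where "z = ee/dd"
    have "z^Q + z + 1 = (dd*ee^Q + dd^Q*ee + dd^Q*dd)/(dd^Q*dd)"
      using dd0 ddQ by (simp add: z_def power_divide field_simps)
    also have "dd*ee^Q + dd^Q*ee + dd^Q*dd = 0" unfolding dd_def ee_def dQ eQ using R0 by simp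
    finally have "z^(2^l) + z + 1 = 0" by (simp add: Q_def)
    then show False using noQroot[OF g] by blast
  qed
  have uv: "u1*v = u*v1" using delta0 c2_eq[OF two] by blast
  have Xe: "u^(Q+1) + u1^(Q+1) = v^(Q+1) + v1^(Q+1)"
  proof -
    have "(u^(Q+1) + u1^(Q+1)) + (v^(Q+1) + v1^(Q+1)) = 0" using H0 by (simp add: add_ac)
    then show ?thesis using c2_eq[OF two] by blast
  qed
  have fqz: "x = 0" if "x^q = x" "Tr q x = 0" for x :: 'a using Fq_zero that by blast
  have q0: "q \<noteq> 0" by simp
  show ?thesis
  proof (cases "u = 0")
    case True
    then have "u1 = 0" unfolding u1_def using q0 by simp
    then have "v^(Q+1) + v1^(Q+1) = 0" using Xe True by simp
    then have "v^(2^l+1) = v1^(2^l+1)" using c2_eq[OF two] unfolding Q_def by blast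
    then have "v = v1" by (rule injQ[OF g])
    then have "v = 0" using fqz[OF _ tv] unfolding v1_def by simp
    then show ?thesis using True by simp
  next
    case un: False
    show ?thesis
    proof (cases "v = 0")
      case True
      then have "v1 = 0" unfolding v1_def using q0 by simp
      then have "u^(Q+1) + u1^(Q+1) = 0" using Xe True by simp
      then have "u^(2^l+1) = u1^(2^l+1)" using c2_eq[OF two] unfolding Q_def by blast
      then have "u = u1" by (rule injQ[OF g])
      then have "u = 0" using fqz[OF _ tu] unfolding u1_def by simp
      then show ?thesis using un by simp
    next
      case vn: False
      define r where "r = u1 / u"
      have ur: "u1 = r*u" using un unfolding r_def by simp
      have vr: "v1 = r*v" using uv un unfolding r_def by (simp add: field_simps)
      have "u^(Q+1)*(1 + r^(Q+1)) = v^(Q+1)*(1 + r^(Q+1))"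
        using Xe unfolding ur vr by (simp add: power_mult_distrib algebra_simps)
      moreover have "1 + r^(Q+1) \<noteq> 0"
      proof
        assume "1 + r^(Q+1) = 0"
        then have "r^(2^l+1) = 1^(2^l+1)" using c2_eq[OF two, of 1 "r^(Q+1)"] unfolding Q_def by simp
        then have "r = 1" by (rule injQ[OF g])
        then have "u^q = u" using ur unfolding u1_def by simp
        then have "u = 0" using fqz[OF _ tu] by simp
        then show False using un by simp
      qed
      ultimately have "u^(2^l+1) = v^(2^l+1)" unfolding Q_def by simp
      then show ?thesis by (rule injQ[OF g])
    qed
  qed
qed

end

lemma pow_sub_dvd: assumes "a dvd b" shows "((2::nat)^a - 1) dvd (2^b - 1)"
proof -
  obtain t where t: "b = a*t" using assms by (elim dvdE)
  have "(2::int)^b - 1 = ((2::int)^a)^t - 1" unfolding t by (simp add: power_mult)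
  also have "\<dots> = ((2::int)^a - 1) * (\<Sum>i<t. ((2::int)^a)^i)" by (rule power_diff_1_eq)
  finally have "((2::int)^a - 1) dvd ((2::int)^b - 1)" by simp
  moreover have "int (2^a - 1) = (2::int)^a - 1" by (simp add: of_nat_diff)
  moreover have "int (2^b - 1) = (2::int)^b - 1" by (simp add: of_nat_diff)
  ultimately have "int (2^a - 1) dvd int (2^b - 1)" by simp
  then show ?thesis by (simp only: int_dvd_int_iff)
qed

lemma pow_gcd_one: assumes "(x::'a::field)^a = 1" "x^b = 1" "a \<noteq> 0" shows "x^(gcd a b) = 1"
proof -
  obtain s t where st: "a * s = b * t + gcd a b" using bezout_nat assms(3) by blast
  have "x^(a*s) = 1" using assms(1) by (simp add: power_mult)
  moreover have "x^(b*t) = 1" using assms(2) by (simp add: power_mult)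
  moreover have "x^(a*s) = x^(b*t) * x^(gcd a b)" using st by (simp add: power_add)
  ultimately show ?thesis by simp
qed

context c2f begin

lemma fval_Fq: assumes aq: "(a::'a)^q = a" shows "poly (f_poly q (2^l) (2^m) (2^n) c) a = c*a^(2^m+2^n)"
proof -
  have "a^q + a = 0" using aq c2_dbl[OF two] by simp
  moreover have "(c*a^(2^m+2^n))^q = c*a^(2^m+2^n)" by (rule Fq_mult[OF cq Fq_pow[OF aq]])
  ultimately show ?thesis unfolding fpoly using Tconst by simp
qed

lemma q_ge2: "q \<ge> 2" using kpos by (simp add: self_le_power)

lemma exists_nonFq: "\<exists>x::'a. x^q \<noteq> x"
proof (rule ccontr)
  assume "\<not> (\<exists>x::'a. x^q \<noteq> x)"
  then have all: "x^q = x" for x :: 'a by blast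
  obtain g :: 'a where g0: "g \<noteq> 0" and gen: "\<forall>x. x \<noteq> 0 \<longrightarrow> (\<exists>i. x = g^i)"
    using gen_exists by blast
  have "g * g^(q-1) = g^q" using q_ge2 by (metis Suc_diff_1 not_numeral_le_zero not_gr_zero power_Suc)
  then have "g^(q-1) = 1" using all[of g] g0 by simp
  moreover have "q - 1 > 0" using q_ge2 by simp
  ultimately have "card (UNIV::'a set) - 1 \<le> q - 1" using gen_order[OF gen] by blast
  then have le1: "(2::nat)^(3*k) - 1 \<le> 2^k - 1" using card3 by simp
  have "(1::nat) \<le> 2^(3*k)" "(1::nat) \<le> 2^k" by simp_all
  then have "(2::nat)^(3*k) \<le> 2^k" using le1 by linarith
  then have "3*k \<le> k" by (rule power_le_imp_le_exp[rotated]) simp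
  then show False using kpos by simp
qed

lemma notinj_e:
  assumes w: "(w::'a)^q = w" "w \<noteq> 1" "w^(2^d+1) = 1" and e: "(2::nat)^m + 2^n = 2^mn*(2^d+1)"
  shows "\<not> inj (poly (f_poly q (2^l) (2^m) (2^n) c))"
proof
  assume inj: "inj (poly (f_poly q (2^l) (2^m) (2^n) c))"
  have "w^(2^m+2^n) = 1" unfolding e using w(3)
    by (simp only: mult.commute[of "2^mn" "2^d+1"] power_mult power_one)
  then have "poly (f_poly q (2^l) (2^m) (2^n) c) w = poly (f_poly q (2^l) (2^m) (2^n) c) 1"
    using fval_Fq[OF w(1)] fval_Fq[of 1] by simp
  then have "w = 1" by (rule injD[OF inj])
  then show False using w(2) by simp
qed

lemma notinj_Q:
  assumes w: "(w::'a)^q = w" "w \<noteq> 1" "w^(2^l+1) = 1"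
    and nl: "\<forall>w::'a. w^q = w \<and> w^(2^d+1) = 1 \<longrightarrow> w = 1"
    and e: "(2::nat)^m + 2^n = 2^mn*(2^d+1)"
  shows "\<not> inj (poly (f_poly q (2^l) (2^m) (2^n) c))"
proof
  assume inj: "inj (poly (f_poly q (2^l) (2^m) (2^n) c))"
  obtain x0 :: 'a where x0: "x0^q \<noteq> x0" using exists_nonFq by blast
  define y0 where "y0 = w*x0"
  have yx: "(y0^q + y0)^(2^l+1) = (x0^q + x0)^(2^l+1)"
  proof -
    have "y0^q + y0 = w*(x0^q + x0)" unfolding y0_def using w(1) by (simp add: power_mult_distrib algebra_simps)
    then show ?thesis using w(3) by (simp add: power_mult_distrib)
  qed
  define Fq where "Fq = {a::'a. a^q = a}"
  define phi where "phi = (\<lambda>a. Tr q (c*(y0+a)^(2^m+2^n)))"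
  have sub: "phi ` Fq \<subseteq> Fq" by (auto simp: phi_def Fq_def Tq)
  have injphi: "inj_on phi Fq"
  proof (rule inj_onI)
    fix a b assume a: "a \<in> Fq" and b: "b \<in> Fq" and ab: "phi a = phi b"
    define t where "t = Tr q y0"
    have aq: "a^q = a" and bq: "b^q = b" using a b by (auto simp: Fq_def)
    have "c*((a + t)^(2^m+2^n) + t^(2^m+2^n)) = c*((b + t)^(2^m+2^n) + t^(2^m+2^n))"
      using ab shift[OF aq, of y0] shift[OF bq, of y0] unfolding phi_def t_def by simp
    then have "(a + t)^(2^m+2^n) = (b + t)^(2^m+2^n)" using c0 by simp
    then have "(a + t)^(2^mn*(2^d+1)) = (b + t)^(2^mn*(2^d+1))" unfolding e .
    moreover have "(a+t)^q = a+t" "(b+t)^q = b+t" using aq bq Tq unfolding t_def by (simp_all add: qadd)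
    ultimately have "a + t = b + t" using inj_e[OF nl] by blast
    then show "a = b" by simp
  qed
  have "phi ` Fq = Fq" by (rule endo_inj_surj) (use sub injphi in auto)
  moreover have "Tr q (c*x0^(2^m+2^n)) \<in> Fq" by (simp add: Fq_def Tq)
  ultimately obtain a where a: "a \<in> Fq" and pa: "phi a = Tr q (c*x0^(2^m+2^n))"
    by (metis imageE)
  have aq: "a^q = a" using a by (simp add: Fq_def)
  define y where "y = y0 + a"
  have "y^q + y = y0^q + y0 + (a + a)" unfolding y_def using aq by (simp add: qadd add_ac)
  then have yy: "y^q + y = y0^q + y0" using c2_dbl[OF two, of a] by simp
  have "poly (f_poly q (2^l) (2^m) (2^n) c) y = poly (f_poly q (2^l) (2^m) (2^n) c) x0"
    unfolding fpoly yy yx using pa unfolding phi_def y_def by simp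
  then have "y = x0" by (rule injD[OF inj])
  then have "a = x0 + y0" unfolding y_def using c2_minus[OF two] by (metis add_diff_cancel_left')
  then have ax: "a = x0 * (1 + w)" unfolding y0_def by (simp add: algebra_simps)
  have w1: "1 + w \<noteq> 0" using w(2) c2_eq[OF two, of 1 w] by auto
  have w1q: "(1 + w)^q = 1 + w" using w(1) by (simp add: qadd)
  have "x0 = a / (1 + w)" using ax w1 by simp
  then have "x0^q = x0" using aq w1q by (simp add: power_divide)
  then show False using x0 by simp
qed

lemma L2: assumes "cond2 k j" shows "\<forall>w::'a. w^q = w \<and> w^(2^j+1) = 1 \<longrightarrow> w = 1"
  using root1[OF two _ _ M1[OF kpos assms]] by blast

lemma L3: assumes "coprime (2^k - 1) (2^j + 1::nat)"
  shows "\<forall>w::'a. w^q = w \<and> w^(2^j+1) = 1 \<longrightarrow> w = 1"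
proof (intro allI impI)
  fix w :: 'a assume h: "w^q = w \<and> w^(2^j+1) = 1"
  then have w0: "w \<noteq> 0" by auto
  have "w * w^(q-1) = w^q" using q_ge2 by (metis Suc_diff_1 not_numeral_le_zero not_gr_zero power_Suc)
  then have "w^(q-1) = 1" using h w0 by simp
  moreover have "q - 1 \<noteq> 0" using q_ge2 by simp
  ultimately have wg: "w^(gcd (q-1) (2^j+1)) = 1" using pow_gcd_one h by blast
  have gg: "gcd (q - 1) (2^j+1) = 1" using assms coprime_iff_gcd_eq_1 by blast
  show "w = 1" using wg unfolding gg by simp
qed

lemma L4: assumes "\<not> coprime (2^k - 1) (2^j + 1::nat)"
  shows "\<exists>w::'a. w^q = w \<and> w \<noteq> 1 \<and> w^(2^j+1) = 1"
proof -
  define G where "G = gcd (2^k - 1) (2^j + 1::nat)"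
  have "G \<noteq> 1" using assms unfolding G_def by (simp add: coprime_iff_gcd_eq_1)
  moreover have "G \<noteq> 0" unfolding G_def by simp
  ultimately have G1: "1 < G" by simp
  have "G dvd 2^k - 1" unfolding G_def by simp
  also have "(2::nat)^k - 1 dvd 2^(3*k) - 1" by (rule pow_sub_dvd) simp
  finally have "G dvd card (UNIV::'a set) - 1" using card3 by simp
  then obtain w :: 'a where w: "w^G = 1" "w \<noteq> 1" using root_exists[OF G1] by blast
  have "w^(q-1) = 1" using w(1) \<open>G dvd 2^k - 1\<close> by (auto elim!: dvdE simp: power_mult)
  then have "w^q = w" using q_ge2 by (metis Suc_diff_1 not_numeral_le_zero not_gr_zero power_Suc mult_1_right)
  moreover have "w^(2^j+1) = 1"
  proof -
    have "G dvd 2^j + 1" unfolding G_def by simp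
    then obtain r where r: "2^j + 1 = G * r" by (elim dvdE)
    show ?thesis unfolding r using w(1) by (simp add: power_mult)
  qed
  ultimately show ?thesis using w(2) by blast
qed

lemma L1: assumes "\<not> cond2 k j"
  shows "\<exists>w::'a. w^q = w \<and> w \<noteq> 1 \<and> w^(2^j+1) = 1"
proof -
  obtain h where h: "2*h dvd k" "h dvd j" "odd (j div h)" "h > 0" using M2[OF assms] by blast
  have d1: "1 < (2::nat)^h + 1" using h(4) by simp
  have "(2::nat)^h + 1 dvd 2^(2*h) - 1"
  proof -
    have sq: "(2::nat)^(2*h) = 2^h * 2^h" by (metis mult_2 power_add)
    have gen: "(x::nat)*x - 1 = (x+1)*(x-1)" for x by (cases x) (simp_all add: algebra_simps)
    have "(2::nat)^(2*h) - 1 = (2^h + 1) * (2^h - 1)" unfolding sq by (rule gen)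
    then show ?thesis by (metis dvd_triv_left)
  qed
  also have "(2::nat)^(2*h) - 1 dvd 2^(3*k) - 1" by (rule pow_sub_dvd) (use h(1) in auto)
  finally have "2^h + 1 dvd card (UNIV::'a set) - 1" using card3 by simp
  then obtain w :: 'a where w: "w^(2^h+1) = 1" "w \<noteq> 1" using root_exists[OF d1] by blast
  have wj: "w^(2^h) * w = 1" using w(1) by (simp add: power_add mult.commute)
  then have w0: "w \<noteq> 0" by auto
  have wi: "w^(2^h) = inverse w" using wj w0 by (simp add: field_simps)
  have it: "w^(2^(h*s)) = (if even s then w else inverse w)" for s
  proof (induction s)
    case 0 then show ?case by simp
  next
    case (Suc s)
    have "w^(2^(h*Suc s)) = (w^(2^(h*s)))^(2^h)"
      by (simp add: power_mult[symmetric] power_add[symmetric] mult.commute)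
    also have "\<dots> = (if even (Suc s) then w else inverse w)"
      using Suc wi by (simp add: power_inverse)
    finally show ?case .
  qed
  have "w^(2^(h*2)) = w" using it[of 2] by simp
  then have wq: "w^q = w" using frob_dvd_closed h(1) by (metis mult.commute)
  have "j = h * (j div h)" using h(2) by simp
  then have "w^(2^j) = inverse w" using it[of "j div h"] h(3) by metis
  then have "w^(2^j+1) = 1" using w0 by simp
  then show ?thesis using wq w(2) by blast
qed

end

context c2f begin

lemma inj_f:
  assumes g: "gcd (2*l) (3*k) dvd l" and nl: "\<forall>w::'a. w^q = w \<and> w^(2^d+1) = 1 \<longrightarrow> w = 1"
    and e: "(2::nat)^m + 2^n = 2^mn*(2^d+1)"
  shows "inj (poly (f_poly q (2^l) (2^m) (2^n) c))"
proof (rule injI)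
  fix x y :: 'a
  assume fxy: "poly (f_poly q (2^l) (2^m) (2^n) c) x = poly (f_poly q (2^l) (2^m) (2^n) c) y"
  define u where "u = x^q + x"
  define v where "v = y^q + y"
  define A where "A = Tr q (c*x^(2^m+2^n))"
  define B where "B = Tr q (c*y^(2^m+2^n))"
  have fe: "u^(2^l+1) + A = v^(2^l+1) + B" using fxy unfolding u_def v_def A_def B_def fpoly .
  have Aq: "A^q = A" unfolding A_def by (rule Tq)
  have Bq: "B^q = B" unfolding B_def by (rule Tq)
  have s1: "(u^(2^l+1) + v^(2^l+1)) + (A + B) = (u^(2^l+1) + A) + (v^(2^l+1) + B)" by (simp add: add_ac)
  also have "\<dots> = 0" unfolding fe by (rule c2_dbl[OF two])
  finally have "u^(2^l+1) + v^(2^l+1) = A + B" using c2_eq[OF two] by blast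
  then have hq: "(u^(2^l+1) + v^(2^l+1))^q = u^(2^l+1) + v^(2^l+1)" by (simp add: qadd Aq Bq)
  have uv: "u = v" using keyH[OF g _ _ hq] Tr_diff_zero unfolding u_def v_def by blast
  have AB: "A = B" using fe uv by simp
  define a where "a = x + y"
  have "(x^q + y^q) + (x + y) = u + v" unfolding u_def v_def by (simp add: add_ac)
  also have "\<dots> = 0" using uv c2_dbl[OF two] by simp
  finally have "x^q + y^q = x + y" using c2_eq[OF two] by blast
  then have aq: "a^q = a" unfolding a_def by (simp add: qadd)
  have ya: "y = x + a" unfolding a_def using c2_dbl[OF two, of x] by (simp add: add.assoc[symmetric])
  define t where "t = Tr q x"
  have "B = Tr q (c*(x+a)^(2^m+2^n))" unfolding B_def using ya by simp
  also have "\<dots> = A + c*((a + t)^(2^m+2^n) + t^(2^m+2^n))" unfolding A_def t_def by (rule shift[OF aq])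
  finally have "c*((a + t)^(2^m+2^n) + t^(2^m+2^n)) = 0" using AB by simp
  then have "(a + t)^(2^m+2^n) + t^(2^m+2^n) = 0" using c0 by simp
  then have "(a + t)^(2^m+2^n) = t^(2^m+2^n)" using c2_eq[OF two] by blast
  then have "(a + t)^(2^mn*(2^d+1)) = t^(2^mn*(2^d+1))" unfolding e .
  moreover have "(a+t)^q = a+t" "t^q = t" using aq Tq unfolding t_def by (simp_all add: qadd)
  ultimately have "a + t = t" using inj_e[OF nl] by blast
  then have "a = 0" by simp
  then show "x = y" using ya by simp
qed

lemma cond_coprime: "cond2 k j \<longleftrightarrow> coprime ((2::nat)^k - 1) (2^j + 1)"
proof
  assume h: "cond2 k j"
  show "coprime ((2::nat)^k - 1) (2^j + 1)"
  proof (rule ccontr)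
    assume "\<not> coprime ((2::nat)^k - 1) (2^j + 1)"
    then obtain w :: 'a where w: "w^q = w" "w \<noteq> 1" "w^(2^j+1) = 1" using L4 by blast
    have "\<forall>w::'a. w^q = w \<and> w^(2^j+1) = 1 \<longrightarrow> w = 1" using L2[OF h] .
    then show False using w by blast
  qed
next
  assume h: "coprime ((2::nat)^k - 1) (2^j + 1)"
  show "cond2 k j"
  proof (rule ccontr)
    assume "\<not> cond2 k j"
    then obtain w :: 'a where w: "w^q = w" "w \<noteq> 1" "w^(2^j+1) = 1" using L1 by blast
    have "\<forall>w::'a. w^q = w \<and> w^(2^j+1) = 1 \<longrightarrow> w = 1" using L3[OF h] .
    then show False using w by blast
  qed
qed

end

lemma ord2_cond: assumes "k > 0" shows "ord2 (int k) \<le> ord2 (int j) \<longleftrightarrow> cond2 k j"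
  using assms unfolding ord2_def cond2_def by auto

lemma ord2_neg: "ord2 (- x) = ord2 x"
  unfolding ord2_def by simp

theorem theorem1p1:
  fixes p k l m n :: nat and c :: "'a::{field,finite}"
  assumes "prime p" and "k > 0"
    and "card (UNIV :: 'a set) = (p ^ k) ^ 3"
    and "c \<noteq> 0" and "c ^ (p ^ k) = c"
  shows "(bij (poly (f_poly (p^k) (p^l) (p^m) (p^n) c))
            \<longleftrightarrow> gcd (p^k - 1) ((p^l + 1) * (p^m + p^n)) = 1)
       \<and> (bij (poly (f_poly (p^k) (p^l) (p^m) (p^n) c))
            \<longleftrightarrow> (p = 2 \<and> ord2 (int k) \<le> min (ord2 (int l)) (ord2 (int m - int n))))"
proof -
  have bij_inj: "bij F \<longleftrightarrow> inj F" for F :: "'a \<Rightarrow> 'a"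
    using finite_UNIV_inj_surj[of F] by (auto simp: bij_def)
  show ?thesis
  proof (cases "p = 2")
    case False
    have "p > 2" using assms(1) False prime_ge_2_nat[of p] by linarith
    then have podd: "odd p" using assms(1) prime_odd_nat by blast
    then obtain t where pt: "p = 2*t + 1" by (elim oddE)
    have two_ne: "(2::'a) \<noteq> 0"
    proof
      assume t2: "(2::'a) = 0"
      have "of_nat p = (1::'a)" unfolding pt using t2 by simp
      then have "of_nat (card (UNIV::'a set)) = (1::'a)" unfolding assms(3) by (simp add: power_mult[symmetric])
      then show False using card_of_nat_zero[where 'a='a] by simp
    qed
    have oq: "odd (p^k)" using podd by simp
    have ee: "even (p^m + p^n)" using podd by simp
    have "poly (f_poly (p^k) (p^l) (p^m) (p^n) c) 1 = poly (f_poly (p^k) (p^l) (p^m) (p^n) c) (-1)"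
    proof -
      have m1q: "(-1::'a)^(p^k) = -1" using oq by (rule neg_one_odd_power)
      have ev1: "(-1::'a)^((p^k)^2*(p^m+p^n)) = 1" by (rule neg_one_even_power) (use ee in simp)
      have ev2: "(-1::'a)^((p^k)*(p^m+p^n)) = 1" by (rule neg_one_even_power) (use ee in simp)
      have ev3: "(-1::'a)^(p^m+p^n) = 1" by (rule neg_one_even_power) (use ee in simp)
      have "poly (f_poly (p^k) (p^l) (p^m) (p^n) c) (-1) = (0::'a)^(p^l+1) + c + c + c"
        unfolding poly_f m1q ev1 ev2 ev3 by simp
      moreover have "poly (f_poly (p^k) (p^l) (p^m) (p^n) c) 1 = (0::'a)^(p^l+1) + c + c + c"
        unfolding poly_f by simp
      ultimately show ?thesis by simp
    qed
    moreover have "(1::'a) \<noteq> -1"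
    proof
      assume h1: "(1::'a) = -1"
      have "(1::'a) + 1 = 0" using h1 eq_neg_iff_add_eq_0[of "1::'a" 1] by blast
      then show False using two_ne by (simp add: one_add_one)
    qed
    ultimately have nb: "\<not> bij (poly (f_poly (p^k) (p^l) (p^m) (p^n) c))"
    proof (intro notI)
      assume eqF: "poly (f_poly (p^k) (p^l) (p^m) (p^n) c) 1 = poly (f_poly (p^k) (p^l) (p^m) (p^n) c) (-1)"
        and ne: "(1::'a) \<noteq> -1" and bF: "bij (poly (f_poly (p^k) (p^l) (p^m) (p^n) c))"
      have "inj (poly (f_poly (p^k) (p^l) (p^m) (p^n) c))" using bF by (rule bij_is_inj)
      then have "(1::'a) = -1" using eqF by (rule injD)
      then show False by (rule notE[OF ne])
    qed
    have "2 dvd p^k - 1" using oq by (simp add: odd_pos)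
    moreover have "2 dvd p^l + 1" using podd by simp
    ultimately have "2 dvd gcd (p^k - 1) ((p^l + 1) * (p^m + p^n))"
      by (intro gcd_greatest) (simp_all only: dvd_mult2)
    then have "gcd (p^k - 1) ((p^l + 1) * (p^m + p^n)) \<noteq> 1"
    proof (intro notI)
      assume h2: "2 dvd gcd (p^k - 1) ((p^l + 1) * (p^m + p^n))"
        and eq: "gcd (p^k - 1) ((p^l + 1) * (p^m + p^n)) = 1"
      from h2 have "(2::nat) dvd 1" by (simp only: eq)
      then show False by simp
    qed
    then show ?thesis using nb False by blast
  next
    case True
    have two: "(2::'a) = 0"
    proof -
      have "of_nat (card (UNIV::'a set)) = (0::'a)" by (rule card_of_nat_zero)
      then have "(2::'a)^(k*3) = 0" unfolding assms(3) True by (simp add: power_mult)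
      then show ?thesis by simp
    qed
    interpret c2f k c
      by unfold_locales (use two assms True in auto)
    define mn where "mn = min m n"
    define d where "d = max m n - min m n"
    have e: "(2::nat)^m + 2^n = 2^mn*(2^d+1)"
    proof (cases "m \<le> n")
      case True
      then have "n = m + d" unfolding d_def by simp
      then show ?thesis unfolding mn_def using True by (simp add: power_add algebra_simps)
    next
      case False
      then have "m = n + d" unfolding d_def by simp
      then show ?thesis unfolding mn_def using False by (simp add: power_add algebra_simps)
    qed
    have NL: "(\<forall>w::'a. w^q = w \<and> w^(2^j+1) = 1 \<longrightarrow> w = 1) \<longleftrightarrow> cond2 k j" for j
      using L1[of j] L2[of j] by blast
    have NLc: "(\<forall>w::'a. w^q = w \<and> w^(2^j+1) = 1 \<longrightarrow> w = 1) \<longleftrightarrow> coprime (2^k-1) (2^j+1::nat)" for j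
      using L3[of j] L4[of j] by blast
    have injiff: "inj (poly (f_poly q (2^l) (2^m) (2^n) c)) \<longleftrightarrow> cond2 k l \<and> cond2 k d"
    proof
      assume inj: "inj (poly (f_poly q (2^l) (2^m) (2^n) c))"
      show "cond2 k l \<and> cond2 k d"
      proof (rule ccontr)
        assume nc: "\<not> (cond2 k l \<and> cond2 k d)"
        show False
        proof (cases "cond2 k d")
          case True
          then have "\<not> cond2 k l" using nc by blast
          then obtain w :: 'a where "w^q = w" "w \<noteq> 1" "w^(2^l+1) = 1" using L1 by blast
          then show False using notinj_Q[OF _ _ _ _ e] NL True inj by blast
        next
          case False
          obtain w :: 'a where "w^q = w" "w \<noteq> 1" "w^(2^d+1) = 1" using L1 False by blast
          then show False using notinj_e[OF _ _ _ e] inj by blast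
        qed
      qed
    next
      assume h: "cond2 k l \<and> cond2 k d"
      have "cond2 (3*k) l" using h M3[OF kpos] by simp
      then have g: "gcd (2*l) (3*k) dvd l" using M1 kpos by simp
      show "inj (poly (f_poly q (2^l) (2^m) (2^n) c))"
        by (rule inj_f[OF g _ e]) (use NL h in blast)
    qed
    have odd1: "odd ((2::nat)^k - 1)" using kpos by (simp add: odd_pos)
    have G: "gcd (2^k - 1) ((2^l + 1) * (2^m + 2^n)) = (1::nat) \<longleftrightarrow> cond2 k l \<and> cond2 k d"
    proof -
      have cm: "coprime ((2::nat)^k - 1) (2^mn)"
        using odd1 by (simp only: coprime_power_right_iff coprime_right_2_iff_odd simp_thms)
      have "gcd (2^k - 1) ((2^l + 1) * (2^m + 2^n)) = (1::nat) \<longleftrightarrow>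
            coprime ((2::nat)^k - 1) ((2^l + 1) * (2^mn*(2^d+1)))"
        unfolding e by (simp only: coprime_iff_gcd_eq_1)
      also have "\<dots> \<longleftrightarrow> coprime ((2::nat)^k - 1) (2^l + 1) \<and> coprime ((2::nat)^k - 1) (2^d+1)"
        using cm by (simp only: coprime_mult_right_iff simp_thms)
      finally show ?thesis by (simp only: cond_coprime)
    qed
    have O: "ord2 (int k) \<le> min (ord2 (int l)) (ord2 (int m - int n)) \<longleftrightarrow> cond2 k l \<and> cond2 k d"
    proof -
      have "ord2 (int m - int n) = ord2 (int d)"
      proof (cases "m \<le> n")
        case True
        then have "int m - int n = - int d" unfolding d_def by simp
        then show ?thesis using ord2_neg by metis
      next
        case False
        then have "int m - int n = int d" unfolding d_def by simp
        then show ?thesis by simp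
      qed
      then show ?thesis using ord2_cond[OF kpos, of l] ord2_cond[OF kpos, of d] by simp
    qed
    have B: "bij (poly (f_poly (p^k) (p^l) (p^m) (p^n) c)) \<longleftrightarrow> cond2 k l \<and> cond2 k d"
      unfolding True bij_inj by (rule injiff)
    have G': "gcd (p^k - 1) ((p^l + 1) * (p^m + p^n)) = 1 \<longleftrightarrow> cond2 k l \<and> cond2 k d"
      unfolding True by (rule G)
    have O': "(p = 2 \<and> ord2 (int k) \<le> min (ord2 (int l)) (ord2 (int m - int n))) \<longleftrightarrow> cond2 k l \<and> cond2 k d"
      using O True by blast
    show ?thesis by (simp only: B G' O' simp_thms)
  qed
qed

end
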